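(* Let $(V_1,\dots,V_n)$ be an $n$-tuple of doubly non-commuting isometries on $H$, let $A=\{i_1,\dots,i_l\}\subseteq\{1,\dots,n\}$ be non-empty with $A^c=\{j_1,\dots,j_{n-l}\}$. Suppose $L$ is a subspace of $H_A$ invariant under $V_{j_1},\dots,V_{j_{n-l}}$ such that $H_A=\bigoplus_{k_{i_1},\dots,k_{i_l}\ge0}V_{i_1}^{k_{i_1}}\cdots V_{i_l}^{k_{i_l}}(L)$ as an orthogonal Hilbert direct sum. Then $L=W_A$.
   Context: Fix $n\ge1$ and $z_{ij}\in\mathbb T$ ($i\ne j$) with $z_{ji}=\overline{z_{ij}}$; $(V_1,\dots,V_n)$ is doubly non-commuting if the $V_i$ are isometries with $V_i^*V_j=\overline{z_{ij}}V_jV_i^*$ for $i\ne j$. For an isometry $S$: $H^{\mathrm{iso}}(S)=\bigoplus_{k\ge0}S^k(\ker S^* )$, $H^{\mathrm{uni}}(S)=\bigcap_{k\ge0}S^k(H)$. $H_A=\bigcap_{i\in A}H^{\mathrm{iso}}(V_i)\cap\bigcap_{i\in A^c}H^{\mathrm{uni}}(V_i)$ (intersection over empty index set $=H$). $W_A=\bigcap_{m_{j_1},\dots,m_{j_{n-l}}\ge0}V_{j_1}^{m_{j_1}}\cdots V_{j_{n-l}}^{m_{j_{n-l}}}\big(\bigcap_{i\in A}\ker V_i^*\big)$ (for $A=\{1,\dots,n\}$, $W_A=\bigcap_i\ker V_i^*$). Subspaces are closed. *)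

theory Defs
  imports "HOL-Analysis.Analysis"
begin

class complex_inner = real_normed_vector +
  fixes scaleC :: "complex \<Rightarrow> 'a \<Rightarrow> 'a"
    and cinner :: "'a \<Rightarrow> 'a \<Rightarrow> complex"
  assumes scaleC_of_real: "scaleC (complex_of_real r) x = scaleR r x"
    and scaleC_add_right: "scaleC a (x + y) = scaleC a x + scaleC a y"
    and scaleC_add_left: "scaleC (a + b) x = scaleC a x + scaleC b x"
    and scaleC_scaleC: "scaleC a (scaleC b x) = scaleC (a * b) x"
    and scaleC_one: "scaleC 1 x = x"
    and cinner_add_left: "cinner (x + y) z = cinner x z + cinner y z"
    and cinner_scaleC_left: "cinner (scaleC a x) y = cnj a * cinner x y"
    and cinner_commute: "cinner x y = cnj (cinner y x)"
    and cinner_norm: "cinner x x = complex_of_real ((norm x)\<^sup>2)"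

text \<open>A complex Hilbert space is then a type of class {complex_inner, complete_space}.\<close>

definition clinear :: "('a::complex_inner \<Rightarrow> 'b::complex_inner) \<Rightarrow> bool" where
  "clinear f \<longleftrightarrow> (\<forall>x y. f (x + y) = f x + f y) \<and> (\<forall>c x. f (scaleC c x) = scaleC c (f x))"

definition csubspace :: "'a::complex_inner set \<Rightarrow> bool" where
  "csubspace L \<longleftrightarrow> 0 \<in> L \<and> (\<forall>x\<in>L. \<forall>y\<in>L. x + y \<in> L) \<and> (\<forall>c. \<forall>x\<in>L. scaleC c x \<in> L) \<and> closed L"

definition cspan :: "'a::complex_inner set \<Rightarrow> 'a set" where
  "cspan X = {x. \<exists>F c. finite F \<and> F \<subseteq> X \<and> x = (\<Sum>v\<in>F. scaleC (c v) v)}"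

definition ccspan :: "'a::complex_inner set \<Rightarrow> 'a set" where
  "ccspan X = closure (cspan X)"

definition orth_sets :: "'a::complex_inner set \<Rightarrow> 'a set \<Rightarrow> bool" where
  "orth_sets X Y \<longleftrightarrow> (\<forall>x\<in>X. \<forall>y\<in>Y. cinner x y = 0)"

definition adj :: "('a::complex_inner \<Rightarrow> 'a) \<Rightarrow> ('a \<Rightarrow> 'a)" where
  "adj T = (THE S. \<forall>x y. cinner (T x) y = cinner x (S y))"

definition isometry :: "('a::complex_inner \<Rightarrow> 'a) \<Rightarrow> bool" where
  "isometry V \<longleftrightarrow> clinear V \<and> (\<forall>x. norm (V x) = norm x)"

definition kernel :: "('a::complex_inner \<Rightarrow> 'a) \<Rightarrow> 'a set" where
  "kernel T = {x. T x = 0}"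

definition doubly_noncommuting ::
  "nat \<Rightarrow> (nat \<Rightarrow> nat \<Rightarrow> complex) \<Rightarrow> (nat \<Rightarrow> 'a::complex_inner \<Rightarrow> 'a) \<Rightarrow> bool" where
  "doubly_noncommuting n z V \<longleftrightarrow>
     (\<forall>i\<in>{1..n}. isometry (V i)) \<and>
     (\<forall>i\<in>{1..n}. \<forall>j\<in>{1..n}. i \<noteq> j \<longrightarrow>
        (\<forall>x. adj (V i) (V j x) = scaleC (cnj (z i j)) (V j (adj (V i) x))))"

text \<open>Wold components of an isometry.\<close>
definition H_iso :: "('a::complex_inner \<Rightarrow> 'a) \<Rightarrow> 'a set" where
  "H_iso S = ccspan (\<Union>k. (S ^^ k) ` kernel (adj S))"

definition H_uni :: "('a::complex_inner \<Rightarrow> 'a) \<Rightarrow> 'a set" where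
  "H_uni S = (\<Inter>k. range (S ^^ k))"

definition H_A :: "nat \<Rightarrow> (nat \<Rightarrow> 'a::complex_inner \<Rightarrow> 'a) \<Rightarrow> nat set \<Rightarrow> 'a set" where
  "H_A n V A = (\<Inter>i\<in>A. H_iso (V i)) \<inter> (\<Inter>i\<in>{1..n} - A. H_uni (V i))"

definition prod_pow :: "(nat \<Rightarrow> 'a \<Rightarrow> 'a) \<Rightarrow> (nat \<Rightarrow> nat) \<Rightarrow> nat set \<Rightarrow> 'a \<Rightarrow> 'a" where
  "prod_pow V m J = foldr (\<lambda>j acc. (V j ^^ m j) \<circ> acc) (sorted_list_of_set J) id"

definition W_A :: "nat \<Rightarrow> (nat \<Rightarrow> 'a::complex_inner \<Rightarrow> 'a) \<Rightarrow> nat set \<Rightarrow> 'a set" where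
  "W_A n V A = (\<Inter>m\<in>({1..n} - A) \<rightarrow>\<^sub>E (UNIV::nat set).
       prod_pow V m ({1..n} - A) ` (\<Inter>i\<in>A. kernel (adj (V i))))"

end

theory Submission
  imports Defs
begin

lemma scaleC_zero_left[simp]: "scaleC 0 (x::'a::complex_inner) = 0"
  using scaleC_of_real[of 0 x] by simp

lemma scaleC_zero_right[simp]: "scaleC c (0::'a::complex_inner) = 0"
  using scaleC_add_right[of c "0::'a" 0] by simp

lemma scaleC_minus_right: "scaleC c (- x::'a::complex_inner) = - scaleC c x"
  using scaleC_add_right[of c x "-x"] by (simp add: eq_neg_iff_add_eq_0 add.commute)

lemma scaleC_minus1: "scaleC (-1) (x::'a::complex_inner) = - x"
  using scaleC_of_real[of "-1" x] by simp

lemma scaleC_diff_right: "scaleC c (x - y::'a::complex_inner) = scaleC c x - scaleC c y"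
  using scaleC_add_right[of c x "-y"] by (simp add: scaleC_minus_right)

lemma cinner_zero_left[simp]: "cinner 0 (y::'a::complex_inner) = 0"
  using cinner_add_left[of "0::'a" 0 y] by simp

lemma cinner_minus_left: "cinner (- x) (y::'a::complex_inner) = - cinner x y"
  using cinner_add_left[of x "-x" y] by (simp add: eq_neg_iff_add_eq_0 add.commute)

lemma cinner_diff_left: "cinner (x - z) (y::'a::complex_inner) = cinner x y - cinner z y"
  using cinner_add_left[of x "-z" y] by (simp add: cinner_minus_left)

lemma cinner_add_right: "cinner x (y + z::'a::complex_inner) = cinner x y + cinner x z"
  by (metis cinner_add_left cinner_commute complex_cnj_add)

lemma cinner_zero_right[simp]: "cinner x (0::'a::complex_inner) = 0"
  by (metis cinner_commute cinner_zero_left complex_cnj_zero)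

lemma cinner_minus_right: "cinner x (- y::'a::complex_inner) = - cinner x y"
  by (metis cinner_commute cinner_minus_left complex_cnj_minus)

lemma cinner_diff_right: "cinner x (y - z::'a::complex_inner) = cinner x y - cinner x z"
  by (metis cinner_commute cinner_diff_left complex_cnj_diff)

lemma cinner_scaleC_right: "cinner x (scaleC a y::'a::complex_inner) = a * cinner x y"
  by (metis cinner_commute cinner_scaleC_left complex_cnj_cnj complex_cnj_mult)

lemma cinner_self_Re: "Re (cinner x (x::'a::complex_inner)) = (norm x)^2"
  by (simp add: cinner_norm)

lemma cinner_eq_zero_iff: "cinner x (x::'a::complex_inner) = 0 \<longleftrightarrow> x = 0"
  by (simp add: cinner_norm)

lemma cinner_ext: "(\<And>x. cinner x u = cinner x (v::'a::complex_inner)) \<Longrightarrow> u = v"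
  by (metis cinner_diff_right cinner_eq_zero_iff right_minus_eq)

lemma norm_add_sq: "(norm (x + y::'a::complex_inner))^2 = (norm x)^2 + (norm y)^2 + 2 * Re (cinner x y)"
proof -
  have "cinner (x+y) (x+y) = cinner x x + cinner x y + cinner y x + cinner y y"
    by (simp add: cinner_add_left cinner_add_right)
  then have "Re (cinner (x+y) (x+y)) = Re (cinner x x) + Re (cinner x y) + Re (cinner y x) + Re (cinner y y)"
    by simp
  moreover have "Re (cinner y x) = Re (cinner x y)" by (subst cinner_commute) simp
  ultimately show ?thesis by (simp add: cinner_self_Re)
qed

lemma norm_diff_sq: "(norm (x - y::'a::complex_inner))^2 = (norm x)^2 + (norm y)^2 - 2 * Re (cinner x y)"
  using norm_add_sq[of x "-y"] by (simp add: cinner_minus_right)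

lemma norm_scaleC: "norm (scaleC c (x::'a::complex_inner)) = cmod c * norm x"
proof -
  have "(norm (scaleC c x))^2 = Re (cinner (scaleC c x) (scaleC c x))" by (simp add: cinner_self_Re)
  also have "\<dots> = Re (cnj c * c * cinner x x)"
    using cinner_scaleC_left[of c x "scaleC c x"] cinner_scaleC_right[of x c x] by (simp only: mult.assoc)
  also have "\<dots> = (cmod c)^2 * (norm x)^2"
  proof -
    have "Im (cinner x x) = 0" by (simp add: cinner_norm)
    moreover have "(cmod c)^2 = (Re c)^2 + (Im c)^2" by (rule cmod_power2)
    ultimately show ?thesis by (simp add: cinner_self_Re) (simp add: algebra_simps power2_eq_square)
  qed
  finally have "(norm (scaleC c x))^2 = (cmod c * norm x)^2" by (simp add: power_mult_distrib)
  then show ?thesis by (simp add: power2_eq_iff_nonneg)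
qed

lemma Re_cinner_scaleR: "Re (cinner (scaleR r x) (y::'a::complex_inner)) = r * Re (cinner x y)"
  by (simp add: scaleC_of_real[symmetric] cinner_scaleC_left)


lemma Re_cinner_scaleR_right: "Re (cinner x (scaleR r (y::'a::complex_inner))) = r * Re (cinner x y)"
  by (simp add: scaleC_of_real[symmetric] cinner_scaleC_right)

lemma Re_cinner_le: "Re (cinner x (y::'a::complex_inner)) \<le> norm x * norm y"
proof (cases "x = 0 \<or> y = 0")
  case True then show ?thesis by auto
next
  case False
  then have nx: "norm x > 0" and ny: "norm y > 0" by auto
  define a where "a = scaleR (1 / norm x) x"
  define b where "b = scaleR (1 / norm y) y"
  have na: "norm a = 1" using nx by (simp add: a_def)
  have nb: "norm b = 1" using ny by (simp add: b_def)
  have "0 \<le> (norm (a - b))^2" by simp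
  then have "Re (cinner a b) \<le> 1" using norm_diff_sq[of a b] na nb by simp
  moreover have "Re (cinner a b) = (1 / norm x) * (1 / norm y) * Re (cinner x y)"
    by (simp add: a_def b_def Re_cinner_scaleR Re_cinner_scaleR_right)
  ultimately have "Re (cinner x y) / (norm x * norm y) \<le> 1" by simp
  then show ?thesis using nx ny by (simp add: divide_le_eq)
qed

lemma cauchy_schwarz: "cmod (cinner x (y::'a::complex_inner)) \<le> norm x * norm y"
proof (cases "cinner x y = 0")
  case True then show ?thesis by simp
next
  case False
  define w where "w = cinner x y"
  define u where "u = cnj w / complex_of_real (cmod w)"
  have cu: "cmod u = 1" using False by (simp add: u_def w_def norm_divide)
  have "cinner x (scaleC u y) = u * w" by (simp add: cinner_scaleC_right w_def)
  also have "\<dots> = complex_of_real (cmod w)" using False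
    by (simp add: u_def w_def complex_norm_square[symmetric] power2_eq_square field_simps)
  finally have "cmod w = Re (cinner x (scaleC u y))" by simp
  also have "\<dots> \<le> norm x * norm (scaleC u y)" by (rule Re_cinner_le)
  also have "\<dots> = norm x * norm y" by (simp add: norm_scaleC cu)
  finally show ?thesis by (simp add: w_def)
qed

lemma bounded_linear_cinner_right: "bounded_linear (\<lambda>y::'a::complex_inner. cinner x y)"
proof (rule bounded_linear_intro[where K = "norm x"])
  show "cinner x (y + z) = cinner x y + cinner x z" for y z by (rule cinner_add_right)
  show "cinner x (scaleR r y) = scaleR r (cinner x y)" for r y
    by (simp add: scaleC_of_real[symmetric] cinner_scaleC_right scaleR_conv_of_real)
  show "norm (cinner x y) \<le> norm y * norm x" for y
    using cauchy_schwarz[of x y] by (simp add: mult.commute)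
qed

lemma closed_orth: "closed {y::'a::complex_inner. cinner x y = 0}"
  using closed_Collect_eq[OF linear_continuous_on[OF bounded_linear_cinner_right[of x]] continuous_on_const]
  by simp

lemma quad_zero:
  fixes r M :: real
  assumes M: "M \<ge> 0" and h: "\<And>t. 2 * t * r \<le> t^2 * M"
  shows "r = 0"
proof -
  define t where "t = r / (M + 1)"
  have "2 * t * r \<le> t^2 * M" by (rule h)
  have pos: "(M+1)^2 > 0" using M by simp
  have nz: "M + 1 \<noteq> 0" using M by simp
  have q: "(M+1) * t = r" using nz by (simp add: t_def)
  have "(M+1)^2 * (2 * t * r) = 2 * r * (M+1) * ((M+1)*t)" by (simp add: power2_eq_square algebra_simps)
  also have "2 * r * (M+1) * ((M+1)*t) = 2 * r * r * (M+1)" by (subst q) (simp add: algebra_simps)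
  finally have e1: "(M+1)^2 * (2 * t * r) = 2 * r * r * (M+1)" .
  have "(M+1)^2 * (t^2 * M) = ((M+1)*t)^2 * M" by (simp add: power_mult_distrib)
  then have e2: "(M+1)^2 * (t^2 * M) = r * r * M" using q by (simp add: power2_eq_square)
  have "(M+1)^2 * (2 * t * r) \<le> (M+1)^2 * (t^2 * M)"
    using \<open>2 * t * r \<le> t^2 * M\<close> pos by (simp add: mult_left_mono)
  then have "2 * r * r * (M+1) \<le> r * r * M" using e1 e2 by simp
  then have "r * r * (M + 2) \<le> 0" by (simp add: algebra_simps)
  moreover have "r * r \<ge> 0" by simp
  moreover have "M + 2 > 0" using M by simp
  ultimately have "r * r \<le> 0" by (auto simp add: mult_le_0_iff)
  then have "r * r = 0" using \<open>r * r \<ge> 0\<close> by linarith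
  then show ?thesis by simp
qed

lemma csubspace_scaleR: "csubspace M \<Longrightarrow> x \<in> M \<Longrightarrow> scaleR r x \<in> M"
  unfolding csubspace_def by (metis scaleC_of_real)

lemma csubspace_minus: "csubspace M \<Longrightarrow> x \<in> M \<Longrightarrow> - x \<in> M"
  unfolding csubspace_def by (metis scaleC_minus1)

lemma csubspace_diff: "csubspace M \<Longrightarrow> x \<in> M \<Longrightarrow> y \<in> M \<Longrightarrow> x - y \<in> M"
  using csubspace_minus unfolding csubspace_def by (metis diff_conv_add_uminus)

lemma projection_exists:
  fixes M :: "'a::{complex_inner,complete_space} set"
  assumes sub: "csubspace M"
  shows "\<exists>p\<in>M. \<forall>m\<in>M. cinner m (y - p) = 0"
proof -
  have M0: "0 \<in> M" and Madd: "\<And>a b. a \<in> M \<Longrightarrow> b \<in> M \<Longrightarrow> a + b \<in> M"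
    and Msc: "\<And>c a. a \<in> M \<Longrightarrow> scaleC c a \<in> M" and Mcl: "closed M"
    using sub unfolding csubspace_def by auto
  define D where "D = (\<lambda>m. (norm (y - m))^2) ` M"
  define d where "d = Inf D"
  have bdd: "bdd_below D" unfolding D_def by (rule bdd_belowI[of _ 0]) auto
  have Dne: "D \<noteq> {}" using M0 by (auto simp: D_def)
  have dle: "d \<le> (norm (y - m))^2" if "m \<in> M" for m
    unfolding d_def by (rule cInf_lower) (use that bdd in \<open>auto simp: D_def\<close>)
  have "\<exists>m\<in>M. (norm (y - m))^2 < d + inverse (real (Suc N))" for N
  proof -
    have "Inf D < d + inverse (real (Suc N))" by (simp add: d_def)
    then obtain x where "x \<in> D" "x < d + inverse (real (Suc N))"
      using cInf_lessD[OF Dne] by blast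
    then show ?thesis by (auto simp: D_def)
  qed
  then obtain f where fM: "\<And>N. f N \<in> M" and fl: "\<And>N. (norm (y - f N))^2 < d + inverse (real (Suc N))"
    by metis
  have est: "(norm (f p - f q))^2 \<le> 2 * inverse (real (Suc p)) + 2 * inverse (real (Suc q))" for p q
  proof -
    define a where "a = y - f p"
    define b where "b = y - f q"
    have par: "(norm (a - b))^2 + (norm (a + b))^2 = 2 * (norm a)^2 + 2 * (norm b)^2"
      using norm_add_sq[of a b] norm_diff_sq[of a b] by simp
    define mid where "mid = scaleR (1/2) (f p + f q)"
    have midM: "mid \<in> M" unfolding mid_def by (rule csubspace_scaleR[OF sub]) (simp add: Madd fM)
    have "a + b = scaleR 2 (y - mid)" by (simp add: a_def b_def mid_def algebra_simps scaleR_2)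
    then have "(norm (a + b))^2 = 4 * (norm (y - mid))^2" by (simp add: power2_eq_square)
    with dle[OF midM] have "(norm (a + b))^2 \<ge> 4 * d" by simp
    moreover have "a - b = f q - f p" by (simp add: a_def b_def)
    moreover have "norm (f q - f p) = norm (f p - f q)" by (rule norm_minus_commute)
    ultimately show ?thesis using par fl[of p] fl[of q] by (simp add: a_def b_def)
  qed
  have "Cauchy f"
  proof (rule metric_CauchyI)
    fix e :: real assume e: "e > 0"
    obtain N where N: "inverse (real (Suc N)) < e^2 / 4"
      using reals_Archimedean[of "e^2/4"] e by auto
    show "\<exists>N. \<forall>m\<ge>N. \<forall>n\<ge>N. dist (f m) (f n) < e"
    proof (intro exI allI impI)
      fix p q assume p: "N \<le> p" and q: "N \<le> q"
      have ip: "inverse (real (Suc p)) \<le> inverse (real (Suc N))" using p by (simp add: le_imp_inverse_le)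
      have iq: "inverse (real (Suc q)) \<le> inverse (real (Suc N))" using q by (simp add: le_imp_inverse_le)
      have "(norm (f p - f q))^2 < e^2"
        using est[of p q] ip iq N by linarith
      then have "(dist (f p) (f q))^2 < e^2" by (simp add: dist_norm)
      then show "dist (f p) (f q) < e" using e by (simp add: power_less_imp_less_base)
    qed
  qed
  then obtain p where fp: "f \<longlonglongrightarrow> p" using Cauchy_convergent_iff convergent_def by blast
  have pM: "p \<in> M" by (rule closed_sequentially[OF Mcl fM fp])
  have "(\<lambda>N. (norm (y - f N))^2) \<longlonglongrightarrow> (norm (y - p))^2"
    by (intro tendsto_intros fp)
  then have nyp: "(norm (y - p))^2 \<le> d"
    by (rule LIMSEQ_le[OF _ LIMSEQ_inverse_real_of_nat_add[of d]]) (use fl less_imp_le in blast)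
  define w where "w = y - p"
  have minim: "(norm w)^2 \<le> (norm (w - m))^2" if "m \<in> M" for m
  proof -
    have "p + m \<in> M" using pM that Madd by auto
    then have "d \<le> (norm (y - (p + m)))^2" by (rule dle)
    moreover have "y - (p + m) = w - m" by (simp add: w_def)
    ultimately have "d \<le> (norm (w - m))^2" by simp
    then show ?thesis using nyp unfolding w_def by linarith
  qed
  have Re0: "Re (cinner w m) = 0" if "m \<in> M" for m
  proof (rule quad_zero[where M = "(norm m)^2"])
    fix t :: real
    have "scaleR t m \<in> M" by (rule csubspace_scaleR[OF sub that])
    from minim[OF this] show "2 * t * Re (cinner w m) \<le> t^2 * (norm m)^2"
      by (simp add: norm_diff_sq Re_cinner_scaleR_right power_mult_distrib)
  qed simp
  have "cinner m w = 0" if "m \<in> M" for m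
  proof -
    have "Re (cinner w m) = 0" by (rule Re0[OF that])
    moreover have "Re (cinner w (scaleC \<i> m)) = 0" by (rule Re0[OF Msc[OF that]])
    then have "Im (cinner w m) = 0" by (simp add: cinner_scaleC_right)
    ultimately have "cinner w m = 0" by (simp add: complex_eq_iff)
    then show ?thesis by (subst cinner_commute) simp
  qed
  then show ?thesis using pM w_def by blast
qed


lemma clinear_add: "clinear f \<Longrightarrow> f (x + y) = f x + f y"
  unfolding clinear_def by blast
lemma clinear_scaleC: "clinear f \<Longrightarrow> f (scaleC c x) = scaleC c (f x)"
  unfolding clinear_def by blast
lemma clinear_zero: "clinear f \<Longrightarrow> f 0 = 0"
  using clinear_add[of f 0 0] by simp
lemma clinear_minus: "clinear f \<Longrightarrow> f (- x) = - f x"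
  using clinear_scaleC[of f "-1" x] by (simp add: scaleC_minus1)
lemma clinear_diff: "clinear f \<Longrightarrow> f (x - y) = f x - f y"
  using clinear_add[of f x "-y"] clinear_minus[of f y] by simp
lemma clinear_scaleR: "clinear f \<Longrightarrow> f (scaleR r x) = scaleR r (f x)"
  using clinear_scaleC[of f "complex_of_real r" x] by (simp add: scaleC_of_real)
lemma clinear_sum: "clinear f \<Longrightarrow> f (sum g F) = sum (\<lambda>v. f (g v)) F"
  by (induction F rule: infinite_finite_induct) (auto simp: clinear_zero clinear_add)
lemma clinear_comp: "clinear f \<Longrightarrow> clinear g \<Longrightarrow> clinear (f \<circ> g)"
  unfolding clinear_def by simp
lemma clinear_id: "clinear id"
  unfolding clinear_def by simp
lemma clinear_funpow: "clinear (f::'a::complex_inner \<Rightarrow> 'a) \<Longrightarrow> clinear (f ^^ k)"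
proof (induction k)
  case 0 show ?case unfolding clinear_def by simp
next
  case (Suc k)
  have "f ^^ Suc k = f \<circ> (f ^^ k)" by simp
  then show ?case using Suc clinear_comp by metis
qed

lemma isometry_clinear: "isometry V \<Longrightarrow> clinear V"
  unfolding isometry_def by blast
lemma isometry_norm: "isometry V \<Longrightarrow> norm (V x) = norm x"
  unfolding isometry_def by blast

lemma isometry_cinner:
  assumes V: "isometry V"
  shows "cinner (V x) (V y) = cinner x y"
proof -
  have l: "clinear V" using V by (rule isometry_clinear)
  have re: "Re (cinner (V a) (V b)) = Re (cinner a b)" for a b
  proof -
    have "(norm (V a + V b))^2 = (norm (a + b))^2"
      using isometry_norm[OF V, of "a+b"] clinear_add[OF l] by simp
    then show ?thesis using norm_add_sq[of "V a" "V b"] norm_add_sq[of a b]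
      isometry_norm[OF V, of a] isometry_norm[OF V, of b] by simp
  qed
  have "Re (cinner (V x) (V y)) = Re (cinner x y)" by (rule re)
  moreover have "Re (cinner (V x) (V (scaleC (-\<i>) y))) = Re (cinner x (scaleC (-\<i>) y))" by (rule re)
  then have "Im (cinner (V x) (V y)) = Im (cinner x y)"
    by (simp add: clinear_scaleC[OF l] cinner_scaleC_right)
  ultimately show ?thesis by (simp add: complex_eq_iff)
qed

lemma isometry_bounded_linear: "isometry V \<Longrightarrow> bounded_linear V"
  by (rule bounded_linear_intro[where K=1])
     (auto simp: clinear_add clinear_scaleR isometry_clinear isometry_norm)

lemma isometry_range_closed:
  fixes V :: "'a::{complex_inner,complete_space} \<Rightarrow> 'a"
  assumes V: "isometry V"
  shows "closed (range V)"
proof (unfold closed_sequential_limits, intro allI impI, elim conjE)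
  fix x l assume xr: "\<forall>n. x n \<in> range V" and xl: "x \<longlonglongrightarrow> l"
  have "\<forall>n. \<exists>w. x n = V w" using xr by blast
  then obtain u where u: "\<And>n. x n = V (u n)" by metis
  have l: "clinear V" using V by (rule isometry_clinear)
  have "Cauchy x" using xl by (rule LIMSEQ_imp_Cauchy)
  have "Cauchy u"
  proof (rule metric_CauchyI)
    fix e :: real assume "e > 0"
    with \<open>Cauchy x\<close> obtain N where N: "\<forall>m\<ge>N. \<forall>n\<ge>N. dist (x m) (x n) < e"
      using metric_CauchyD by blast
    have "dist (u m) (u n) = dist (x m) (x n)" for m n
      by (simp add: dist_norm u clinear_diff[OF l, symmetric] isometry_norm[OF V])
    then show "\<exists>N. \<forall>m\<ge>N. \<forall>n\<ge>N. dist (u m) (u n) < e" using N by metis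
  qed
  then obtain w where uw: "u \<longlonglongrightarrow> w" using Cauchy_convergent_iff convergent_def by blast
  have "(\<lambda>n. V (u n)) \<longlonglongrightarrow> V w"
    by (rule bounded_linear.tendsto[OF isometry_bounded_linear[OF V] uw])
  moreover have "x = (\<lambda>n. V (u n))" using u by auto
  ultimately have "x \<longlonglongrightarrow> V w" by simp
  then have "l = V w" using xl LIMSEQ_unique by blast
  then show "l \<in> range V" by simp
qed

lemma isometry_range_csubspace:
  fixes V :: "'a::{complex_inner,complete_space} \<Rightarrow> 'a"
  assumes V: "isometry V"
  shows "csubspace (range V)"
proof -
  have l: "clinear V" using V by (rule isometry_clinear)
  show ?thesis unfolding csubspace_def
  proof (intro conjI ballI allI)
    show "0 \<in> range V" using clinear_zero[OF l] by (metis rangeI)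
    show "x + y \<in> range V" if "x \<in> range V" "y \<in> range V" for x y
    proof -
      from that obtain a b where "x = V a" "y = V b" by auto
      then have "x + y = V (a + b)" by (simp add: clinear_add[OF l])
      then show ?thesis by simp
    qed
    show "scaleC c x \<in> range V" if "x \<in> range V" for c x
    proof -
      from that obtain a where "x = V a" by auto
      then have "scaleC c x = V (scaleC c a)" by (simp add: clinear_scaleC[OF l])
      then show ?thesis by simp
    qed
    show "closed (range V)" by (rule isometry_range_closed[OF V])
  qed
qed

lemma adj_prop:
  fixes V :: "'a::{complex_inner,complete_space} \<Rightarrow> 'a"
  assumes V: "isometry V"
  shows "cinner (V x) y = cinner x (adj V y)"
proof -
  have "\<forall>y. \<exists>w. \<forall>x. cinner (V x) y = cinner x w"
  proof
    fix y
    obtain p where p: "p \<in> range V" "\<forall>m\<in>range V. cinner m (y - p) = 0"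
      using projection_exists[OF isometry_range_csubspace[OF V]] by blast
    then obtain w where pw: "p = V w" by blast
    have "cinner (V x) y = cinner x w" for x
    proof -
      have "cinner (V x) (y - p) = 0" using p by blast
      then have "cinner (V x) y = cinner (V x) p" by (simp add: cinner_diff_right)
      then show ?thesis by (simp add: pw isometry_cinner[OF V])
    qed
    then show "\<exists>w. \<forall>x. cinner (V x) y = cinner x w" by blast
  qed
  then obtain S where S: "\<forall>y x. cinner (V x) y = cinner x (S y)" by metis
  have ex1: "\<exists>!S. \<forall>x y. cinner (V x) y = cinner x (S y)"
  proof
    show "\<forall>x y. cinner (V x) y = cinner x (S y)" using S by blast
    fix S' assume S': "\<forall>x y. cinner (V x) y = cinner x (S' y)"
    show "S' = S"
    proof
      fix y show "S' y = S y" by (rule cinner_ext) (use S S' in metis)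
    qed
  qed
  show ?thesis unfolding adj_def using theI'[OF ex1] by blast
qed

lemma adj_prop2:
  fixes V :: "'a::{complex_inner,complete_space} \<Rightarrow> 'a"
  assumes V: "isometry V"
  shows "cinner y (V x) = cinner (adj V y) x"
  by (metis adj_prop[OF V] cinner_commute)

lemma adj_clinear:
  fixes V :: "'a::{complex_inner,complete_space} \<Rightarrow> 'a"
  assumes V: "isometry V"
  shows "clinear (adj V)"
  unfolding clinear_def
proof (intro conjI allI)
  show "adj V (x + y) = adj V x + adj V y" for x y
    by (rule cinner_ext) (simp add: adj_prop[OF V, symmetric] cinner_add_right)
  show "adj V (scaleC c x) = scaleC c (adj V x)" for c x
    by (rule cinner_ext) (simp add: adj_prop[OF V, symmetric] cinner_scaleC_right)
qed

lemma adj_iso_left: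
  fixes V :: "'a::{complex_inner,complete_space} \<Rightarrow> 'a"
  assumes V: "isometry V"
  shows "adj V (V x) = x"
  by (rule cinner_ext[symmetric]) (simp add: adj_prop[OF V, symmetric] isometry_cinner[OF V])

lemma adj_norm_le:
  fixes V :: "'a::{complex_inner,complete_space} \<Rightarrow> 'a"
  assumes V: "isometry V"
  shows "norm (adj V y) \<le> norm y"
proof -
  have "(norm (adj V y))^2 = Re (cinner (adj V y) (adj V y))" by (simp add: cinner_self_Re)
  also have "\<dots> = Re (cinner y (V (adj V y)))" by (simp add: adj_prop2[OF V])
  also have "\<dots> \<le> norm y * norm (V (adj V y))" by (rule Re_cinner_le)
  also have "\<dots> = norm y * norm (adj V y)" by (simp add: isometry_norm[OF V])
  finally have "norm (adj V y) * norm (adj V y) \<le> norm y * norm (adj V y)"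
    by (simp add: power2_eq_square)
  then show ?thesis
    by (cases "norm (adj V y) = 0") (auto simp: mult_le_cancel_right)
qed

lemma adj_bounded_linear:
  fixes V :: "'a::{complex_inner,complete_space} \<Rightarrow> 'a"
  assumes V: "isometry V"
  shows "bounded_linear (adj V)"
  by (rule bounded_linear_intro[where K=1])
     (auto simp: clinear_add clinear_scaleR adj_clinear[OF V] adj_norm_le[OF V])

lemma adj_norm_eq_range:
  fixes V :: "'a::{complex_inner,complete_space} \<Rightarrow> 'a"
  assumes V: "isometry V" and eq: "norm (adj V y) = norm y"
  shows "V (adj V y) = y"
proof -
  have "(norm (y - V (adj V y)))^2 = (norm y)^2 + (norm (adj V y))^2 - 2 * Re (cinner y (V (adj V y)))"
    by (simp add: norm_diff_sq isometry_norm[OF V])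
  also have "Re (cinner y (V (adj V y))) = (norm (adj V y))^2"
    by (simp add: adj_prop2[OF V] cinner_self_Re)
  finally have "(norm (y - V (adj V y)))^2 = 0" using eq by simp
  then show ?thesis by simp
qed

lemma range_adj:
  fixes V :: "'a::{complex_inner,complete_space} \<Rightarrow> 'a"
  assumes V: "isometry V" and "y \<in> range V"
  shows "V (adj V y) = y"
  using assms adj_iso_left[OF V] by auto


definition FP :: "(nat \<Rightarrow> 'a \<Rightarrow> 'a) \<Rightarrow> (nat \<Rightarrow> nat) \<Rightarrow> nat list \<Rightarrow> 'a \<Rightarrow> 'a" where
  "FP W m xs = foldr (\<lambda>j acc. (W j ^^ m j) \<circ> acc) xs id"

lemma FP_Nil[simp]: "FP W m [] x = x"
  by (simp add: FP_def)

lemma FP_Cons[simp]: "FP W m (j # xs) x = (W j ^^ m j) (FP W m xs x)"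
  by (simp add: FP_def)

lemma pow_comm_right:
  fixes T S :: "'a::complex_inner \<Rightarrow> 'a"
  assumes T: "clinear T" and S: "clinear S" and c: "\<And>x. T (S x) = scaleC c (S (T x))"
  shows "T ((S ^^ k) x) = scaleC (c ^ k) ((S ^^ k) (T x))"
proof (induction k)
  case 0 show ?case by (simp add: scaleC_one)
next
  case (Suc k)
  have "T ((S ^^ Suc k) x) = T (S ((S ^^ k) x))" by simp
  also have "\<dots> = scaleC c (S (T ((S ^^ k) x)))" by (rule c)
  also have "\<dots> = scaleC c (S (scaleC (c ^ k) ((S ^^ k) (T x))))" by (simp add: Suc)
  also have "\<dots> = scaleC (c ^ Suc k) ((S ^^ Suc k) (T x))"
    by (simp add: clinear_scaleC[OF S] scaleC_scaleC)
  finally show ?case .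
qed

lemma pow_comm_left:
  fixes T S :: "'a::complex_inner \<Rightarrow> 'a"
  assumes T: "clinear T" and S: "clinear S" and c: "\<And>x. T (S x) = scaleC c (S (T x))"
  shows "(T ^^ k) (S x) = scaleC (c ^ k) (S ((T ^^ k) x))"
proof (induction k)
  case 0 show ?case by (simp add: scaleC_one)
next
  case (Suc k)
  have "(T ^^ Suc k) (S x) = T ((T ^^ k) (S x))" by simp
  also have "\<dots> = T (scaleC (c ^ k) (S ((T ^^ k) x)))" by (simp add: Suc)
  also have "\<dots> = scaleC (c ^ k) (scaleC c (S (T ((T ^^ k) x))))" by (simp add: clinear_scaleC[OF T] c)
  also have "\<dots> = scaleC (c ^ Suc k) (S ((T ^^ Suc k) x))"
    by (simp add: scaleC_scaleC mult.commute)
  finally show ?case .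
qed

lemma FP_clinear:
  fixes W :: "nat \<Rightarrow> 'a::complex_inner \<Rightarrow> 'a"
  shows "(\<forall>j\<in>set xs. clinear (W j)) \<Longrightarrow> clinear (FP W m xs)"
proof (induction xs)
  case Nil
  have "FP W m [] = id" by (rule ext) simp
  then show ?case using clinear_id by metis
next
  case (Cons a xs)
  have "FP W m (a # xs) = (W a ^^ m a) \<circ> FP W m xs" by (rule ext) simp
  moreover have "clinear ((W a ^^ m a) \<circ> FP W m xs)"
    using Cons by (intro clinear_comp clinear_funpow) auto
  ultimately show ?case by metis
qed

lemma FP_zero: "(\<forall>j\<in>set xs. m j = 0) \<Longrightarrow> FP W m xs x = x"
  by (induction xs) auto

lemma FP_cong: "(\<forall>j\<in>set xs. m j = m' j) \<Longrightarrow> FP W m xs x = FP W m' xs x"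
  by (induction xs) auto

lemma FP_single:
  "distinct xs \<Longrightarrow> j0 \<in> set xs \<Longrightarrow> (\<forall>j\<in>set xs. j \<noteq> j0 \<longrightarrow> m j = 0) \<Longrightarrow> FP W m xs x = (W j0 ^^ m j0) x"
proof (induction xs)
  case Nil then show ?case by simp
next
  case (Cons a xs)
  show ?case
  proof (cases "a = j0")
    case True
    then have "FP W m xs x = x" using Cons.prems by (intro FP_zero) auto
    then show ?thesis using True by simp
  next
    case False
    then have "FP W m xs x = (W j0 ^^ m j0) x" using Cons by auto
    moreover have "m a = 0" using Cons.prems False by auto
    ultimately show ?thesis by simp
  qed
qed

lemma FP_pull:
  fixes W :: "nat \<Rightarrow> 'a::complex_inner \<Rightarrow> 'a"
  assumes lin: "\<forall>a\<in>set xs. clinear (W a)"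
    and comm: "\<forall>a\<in>set xs. \<forall>b\<in>set xs. a \<noteq> b \<longrightarrow> c a b \<noteq> 0 \<and> (\<forall>x. W a (W b x) = scaleC (c a b) (W b (W a x)))"
    and "distinct xs" and "i \<in> set xs" and "m i \<ge> 1"
  shows "\<exists>d. d \<noteq> 0 \<and> (\<forall>x. FP W m xs x = scaleC d (W i (FP W (m(i := m i - 1)) xs x)))"
  using assms
proof (induction xs)
  case Nil then show ?case by simp
next
  case (Cons j xs)
  show ?case
  proof (cases "j = i")
    case True
    then have ni: "i \<notin> set xs" using Cons.prems by auto
    have eq: "FP W (m(i := m i - 1)) xs x = FP W m xs x" for x by (rule FP_cong) (use ni in auto)
    have "(W i ^^ m i) y = W i ((W i ^^ (m i - 1)) y)" for y
    proof -
      have "m i = Suc (m i - 1)" using Cons.prems by simp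
      then have "(W i ^^ m i) y = (W i ^^ Suc (m i - 1)) y" by metis
      then show ?thesis by simp
    qed
    then have "\<forall>x. FP W m (j # xs) x = scaleC 1 (W i (FP W (m(i := m i - 1)) (j # xs) x))"
      using True eq by (simp add: scaleC_one)
    then show ?thesis using one_neq_zero by blast
  next
    case False
    have ix: "i \<in> set xs" using Cons.prems False by auto
    have linxs: "\<forall>a\<in>set xs. clinear (W a)" using Cons.prems(1) by simp
    have commxs: "\<forall>a\<in>set xs. \<forall>b\<in>set xs. a \<noteq> b \<longrightarrow> c a b \<noteq> 0 \<and> (\<forall>x. W a (W b x) = scaleC (c a b) (W b (W a x)))"
      using Cons.prems(2) by (meson list.set_intros(2))
    have dxs: "distinct xs" using Cons.prems(3) by simp
    obtain d where d: "d \<noteq> 0" "\<forall>x. FP W m xs x = scaleC d (W i (FP W (m(i := m i - 1)) xs x))"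
      using Cons.IH[OF linxs commxs dxs ix Cons.prems(5)] by blast
    have jx: "j \<in> set (j # xs)" and ix': "i \<in> set (j # xs)" using ix by auto
    have lj: "clinear (W j)" and li: "clinear (W i)" using Cons.prems(1) jx ix' by blast+
    have cj: "c j i \<noteq> 0 \<and> (\<forall>x. W j (W i x) = scaleC (c j i) (W i (W j x)))"
      using Cons.prems(2) jx ix' False by blast
    then have cji: "c j i \<noteq> 0" "\<And>x. W j (W i x) = scaleC (c j i) (W i (W j x))" by blast+
    have mj: "(m(i := m i - 1)) j = m j" using False by simp
    have "FP W m (j # xs) x = scaleC (d * c j i ^ m j) (W i (FP W (m(i := m i - 1)) (j # xs) x))" for x
    proof -
      have "FP W m (j # xs) x = (W j ^^ m j) (scaleC d (W i (FP W (m(i := m i - 1)) xs x)))"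
        using d by simp
      also have "\<dots> = scaleC d ((W j ^^ m j) (W i (FP W (m(i := m i - 1)) xs x)))"
        by (simp add: clinear_scaleC[OF clinear_funpow[OF lj]])
      also have "\<dots> = scaleC d (scaleC (c j i ^ m j) (W i ((W j ^^ m j) (FP W (m(i := m i - 1)) xs x))))"
        by (simp add: pow_comm_left[OF lj li cji(2)])
      also have "\<dots> = scaleC (d * c j i ^ m j) (W i (FP W (m(i := m i - 1)) (j # xs) x))"
        using mj by (simp add: scaleC_scaleC)
      finally show ?thesis .
    qed
    moreover have "d * c j i ^ m j \<noteq> 0" using d cji by simp
    ultimately show ?thesis by blast
  qed
qed

lemma FP_through:
  fixes W :: "nat \<Rightarrow> 'a::complex_inner \<Rightarrow> 'a"
  assumes lin: "\<forall>a\<in>set xs. clinear (W a)" and lj: "clinear (W j)"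
    and comm: "\<forall>a\<in>set xs. c a \<noteq> 0 \<and> (\<forall>x. W j (W a x) = scaleC (c a) (W a (W j x)))"
  shows "\<exists>d. d \<noteq> 0 \<and> (\<forall>x. W j (FP W m xs x) = scaleC d (FP W m xs (W j x)))"
  using lin comm
proof (induction xs)
  case Nil then show ?case by (intro exI[of _ 1]) (simp add: scaleC_one)
next
  case (Cons a xs)
  obtain d where d: "d \<noteq> 0" "\<forall>x. W j (FP W m xs x) = scaleC d (FP W m xs (W j x))"
    using Cons by auto
  have la: "clinear (W a)" and ca: "c a \<noteq> 0" "\<And>x. W j (W a x) = scaleC (c a) (W a (W j x))"
    using Cons.prems by auto
  have "W j (FP W m (a # xs) x) = scaleC (c a ^ m a * d) (FP W m (a # xs) (W j x))" for x
  proof -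
    have "W j (FP W m (a # xs) x) = W j ((W a ^^ m a) (FP W m xs x))" by simp
    also have "\<dots> = scaleC (c a ^ m a) ((W a ^^ m a) (W j (FP W m xs x)))"
      by (rule pow_comm_right[OF lj la ca(2)])
    also have "\<dots> = scaleC (c a ^ m a) ((W a ^^ m a) (scaleC d (FP W m xs (W j x))))" using d by simp
    also have "\<dots> = scaleC (c a ^ m a * d) (FP W m (a # xs) (W j x))"
      by (simp add: clinear_scaleC[OF clinear_funpow[OF la]] scaleC_scaleC)
    finally show ?thesis .
  qed
  moreover have "c a ^ m a * d \<noteq> 0" using d ca by simp
  ultimately show ?case by blast
qed

lemma pow_surj:
  assumes "\<forall>x\<in>L. \<exists>y\<in>L. x = T y" "x \<in> L"
  shows "\<exists>y\<in>L. x = (T ^^ k) y"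
proof (induction k)
  case 0 show ?case using assms(2) by auto
next
  case (Suc k)
  then obtain y where y: "y \<in> L" "x = (T ^^ k) y" by blast
  then obtain u where "u \<in> L" "y = T u" using assms(1) by blast
  then have "x = (T ^^ Suc k) u" using y by (simp add: funpow_swap1)
  then show ?case using \<open>u \<in> L\<close> by blast
qed

lemma FP_surj:
  assumes "\<forall>j\<in>set xs. \<forall>x\<in>L. \<exists>y\<in>L. x = W j y" "x \<in> L"
  shows "\<exists>y\<in>L. x = FP W m xs y"
  using assms
proof (induction xs arbitrary: x)
  case Nil then show ?case by auto
next
  case (Cons a xs)
  obtain u where u: "u \<in> L" "x = (W a ^^ m a) u" using pow_surj[of L "W a" x "m a"] Cons.prems by auto
  obtain y where "y \<in> L" "u = FP W m xs y" using Cons.IH[of u] Cons.prems u by auto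
  then show ?case using u by auto
qed


lemma csubspace_sum_mem:
  "csubspace M \<Longrightarrow> (\<forall>v\<in>F. f v \<in> M) \<Longrightarrow> sum f F \<in> M"
  by (induction F rule: infinite_finite_induct) (auto simp: csubspace_def)

lemma scaleC_sum: "scaleC a (sum f F) = sum (\<lambda>v. scaleC a (f v :: 'a::complex_inner)) F"
  by (induction F rule: infinite_finite_induct) (auto simp: scaleC_add_right)

lemma cinner_sum_right: "cinner x (sum f F) = sum (\<lambda>v. cinner x (f v :: 'a::complex_inner)) F"
  by (induction F rule: infinite_finite_induct) (auto simp: cinner_add_right)

lemma csubspace_scaleC_mem: "csubspace M \<Longrightarrow> x \<in> M \<Longrightarrow> scaleC c x \<in> M"
  unfolding csubspace_def by simp

lemma cspan_subset: "csubspace M \<Longrightarrow> X \<subseteq> M \<Longrightarrow> cspan X \<subseteq> M"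
proof
  fix x assume M: "csubspace M" and XM: "X \<subseteq> M" and x: "x \<in> cspan X"
  from x obtain F c where F: "finite F" "F \<subseteq> X" "x = (\<Sum>v\<in>F. scaleC (c v) v)"
    unfolding cspan_def mem_Collect_eq by blast
  have "\<forall>v\<in>F. scaleC (c v) v \<in> M" using XM F(2) csubspace_scaleC_mem[OF M] by blast
  then show "x \<in> M" using csubspace_sum_mem[OF M] F(3) by simp
qed

lemma cspan_zero: "0 \<in> cspan X"
proof -
  have "finite {} \<and> {} \<subseteq> X \<and> 0 = (\<Sum>v\<in>{}. scaleC ((\<lambda>_. 0) v) v)" by simp
  then show ?thesis unfolding cspan_def mem_Collect_eq by (intro exI)
qed

lemma cspan_superset: "X \<subseteq> cspan (X::'a::complex_inner set)"
proof
  fix x assume "x \<in> X"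
  then have "finite {x} \<and> {x} \<subseteq> X \<and> x = (\<Sum>v\<in>{x}. scaleC ((\<lambda>_. 1) v) v)" by (simp add: scaleC_one)
  then show "x \<in> cspan X" unfolding cspan_def mem_Collect_eq by (intro exI)
qed

lemma cspan_add:
  assumes "x \<in> cspan X" "y \<in> cspan X"
  shows "x + y \<in> cspan (X::'a::complex_inner set)"
proof -
  obtain F c where F: "finite F" "F \<subseteq> X" "x = (\<Sum>v\<in>F. scaleC (c v) v)" using assms(1) unfolding cspan_def mem_Collect_eq by (elim exE conjE)
  obtain G d where G: "finite G" "G \<subseteq> X" "y = (\<Sum>v\<in>G. scaleC (d v) v)" using assms(2) unfolding cspan_def mem_Collect_eq by (elim exE conjE)
  define e where "e v = (if v \<in> F then c v else 0) + (if v \<in> G then d v else 0)" for v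
  have fin: "finite (F \<union> G)" using F G by simp
  have "(\<Sum>v\<in>F \<union> G. scaleC (e v) v) = (\<Sum>v\<in>F \<union> G. (if v \<in> F then scaleC (c v) v else 0)) + (\<Sum>v\<in>F \<union> G. (if v \<in> G then scaleC (d v) v else 0))"
  proof -
    have "scaleC (e v) v = (if v \<in> F then scaleC (c v) v else 0) + (if v \<in> G then scaleC (d v) v else 0)" for v
      by (auto simp: e_def scaleC_add_left)
    then show ?thesis by (simp add: sum.distrib)
  qed
  also have "(\<Sum>v\<in>F \<union> G. (if v \<in> F then scaleC (c v) v else 0)) = (\<Sum>v\<in>(F \<union> G) \<inter> F. scaleC (c v) v)"
    by (rule sum.inter_restrict[OF fin, symmetric])
  also have "(F \<union> G) \<inter> F = F" by auto
  also have "(\<Sum>v\<in>F \<union> G. (if v \<in> G then scaleC (d v) v else 0)) = (\<Sum>v\<in>(F \<union> G) \<inter> G. scaleC (d v) v)"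
    by (rule sum.inter_restrict[OF fin, symmetric])
  also have "(F \<union> G) \<inter> G = G" by auto
  finally have "x + y = (\<Sum>v\<in>F \<union> G. scaleC (e v) v)" using F G by simp
  then have "finite (F \<union> G) \<and> F \<union> G \<subseteq> X \<and> x + y = (\<Sum>v\<in>F \<union> G. scaleC (e v) v)" using fin F G by simp
  then show ?thesis unfolding cspan_def mem_Collect_eq by (intro exI)
qed

lemma cspan_scaleC:
  assumes "x \<in> cspan X"
  shows "scaleC a x \<in> cspan (X::'a::complex_inner set)"
proof -
  obtain F c where F: "finite F" "F \<subseteq> X" "x = (\<Sum>v\<in>F. scaleC (c v) v)" using assms(1) unfolding cspan_def mem_Collect_eq by (elim exE conjE)
  have "scaleC a x = (\<Sum>v\<in>F. scaleC ((\<lambda>v. a * c v) v) v)" using F by (simp add: scaleC_sum scaleC_scaleC)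
  then have "finite F \<and> F \<subseteq> X \<and> scaleC a x = (\<Sum>v\<in>F. scaleC ((\<lambda>v. a * c v) v) v)" using F by simp
  then show ?thesis unfolding cspan_def mem_Collect_eq by (intro exI)
qed

lemma bounded_linear_scaleC: "bounded_linear (\<lambda>x::'a::complex_inner. scaleC c x)"
proof (rule bounded_linear_intro[where K="cmod c"])
  show "scaleC c (x + y) = scaleC c x + scaleC c y" for x y by (rule scaleC_add_right)
  show "scaleC c (scaleR r x) = scaleR r (scaleC c x)" for r x
  proof -
    have "scaleC c (scaleR r x) = scaleC c (scaleC (complex_of_real r) x)" by (simp only: scaleC_of_real)
    also have "\<dots> = scaleC (complex_of_real r) (scaleC c x)" by (simp only: scaleC_scaleC mult.commute)
    also have "\<dots> = scaleR r (scaleC c x)" by (simp only: scaleC_of_real)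
    finally show ?thesis .
  qed
  show "norm (scaleC c x) \<le> norm x * cmod c" for x by (simp add: norm_scaleC mult.commute)
qed

lemma csubspace_closure:
  fixes S :: "'a::complex_inner set"
  assumes z: "0 \<in> S" and a: "\<And>x y. x \<in> S \<Longrightarrow> y \<in> S \<Longrightarrow> x + y \<in> S"
    and s: "\<And>c x. x \<in> S \<Longrightarrow> scaleC c x \<in> S"
  shows "csubspace (closure S)"
  unfolding csubspace_def
proof (intro conjI ballI allI)
  show "0 \<in> closure S" using z closure_subset by blast
  show "x + y \<in> closure S" if xc: "x \<in> closure S" "y \<in> closure S" for x y
  proof -
    obtain f where f: "\<forall>n. f n \<in> S" "f \<longlonglongrightarrow> x" using xc(1) unfolding closure_sequential by blast
    obtain g where g: "\<forall>n. g n \<in> S" "g \<longlonglongrightarrow> y" using xc(2) unfolding closure_sequential by blast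
    have "(\<lambda>n. f n + g n) \<longlonglongrightarrow> x + y" using f g by (intro tendsto_intros)
    moreover have "\<forall>n. f n + g n \<in> S" using f g a by auto
    ultimately have "(\<forall>n. f n + g n \<in> S) \<and> (\<lambda>n. f n + g n) \<longlonglongrightarrow> x + y" by simp
    then show ?thesis by (rule iffD2[OF closure_sequential, OF exI])
  qed
  show "scaleC c x \<in> closure S" if xc: "x \<in> closure S" for c x
  proof -
    obtain f where f: "\<forall>n. f n \<in> S" "f \<longlonglongrightarrow> x" using xc(1) unfolding closure_sequential by blast
    have "(\<lambda>n. scaleC c (f n)) \<longlonglongrightarrow> scaleC c x"
      by (rule bounded_linear.tendsto[OF bounded_linear_scaleC f(2)])
    moreover have "\<forall>n. scaleC c (f n) \<in> S" using f s by auto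
    ultimately have "(\<forall>n. scaleC c (f n) \<in> S) \<and> (\<lambda>n. scaleC c (f n)) \<longlonglongrightarrow> scaleC c x" by simp
    then show ?thesis by (rule iffD2[OF closure_sequential, OF exI])
  qed
  show "closed (closure S)" by simp
qed

lemma csubspace_ccspan: "csubspace (ccspan (X::'a::complex_inner set))"
  unfolding ccspan_def by (rule csubspace_closure) (auto intro: cspan_zero cspan_add cspan_scaleC)

lemma ccspan_superset: "X \<subseteq> ccspan (X::'a::complex_inner set)"
  unfolding ccspan_def using cspan_superset closure_subset by blast

lemma ccspan_invariant:
  fixes T :: "'a::complex_inner \<Rightarrow> 'a"
  assumes bl: "bounded_linear T" and cl: "clinear T" and TS: "T ` S \<subseteq> ccspan S"
  shows "T ` ccspan S \<subseteq> ccspan S"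
proof -
  have "T ` cspan S \<subseteq> ccspan S"
  proof clarify
    fix x assume "x \<in> cspan S"
    then obtain F c where F: "finite F" "F \<subseteq> S" "x = (\<Sum>v\<in>F. scaleC (c v) v)" unfolding cspan_def by blast
    have "T x = (\<Sum>v\<in>F. scaleC (c v) (T v))" using F by (simp add: clinear_sum[OF cl] clinear_scaleC[OF cl])
    also have "\<dots> \<in> ccspan S"
    proof (rule csubspace_sum_mem[OF csubspace_ccspan], rule ballI)
      fix v assume "v \<in> F"
      then have "T v \<in> ccspan S" using F(2) TS by blast
      then show "scaleC (c v) (T v) \<in> ccspan S" by (rule csubspace_scaleC_mem[OF csubspace_ccspan])
    qed
    finally show "T x \<in> ccspan S" .
  qed
  then have "closure (T ` cspan S) \<subseteq> ccspan S"
    using csubspace_ccspan[of S] unfolding csubspace_def by (simp add: closure_minimal)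
  moreover have "T ` closure (cspan S) \<subseteq> closure (T ` cspan S)"
    by (rule closure_bounded_linear_image_subset[OF bl])
  ultimately show ?thesis unfolding ccspan_def by blast
qed

lemma decomp:
  fixes L :: "'a::complex_inner set"
  assumes L: "csubspace L" and y: "y \<in> closure (cspan U)"
    and orth: "\<forall>v\<in>U. v \<notin> L \<longrightarrow> (\<forall>a\<in>L. cinner a v = 0) \<and> cinner y v = 0"
  shows "y \<in> L"
proof -
  have key: "\<exists>a\<in>L. norm (y - a) \<le> norm (y - s)" if s: "s \<in> cspan U" for s
  proof -
    obtain F c where F: "finite F" "F \<subseteq> U" "s = (\<Sum>v\<in>F. scaleC (c v) v)" using s unfolding cspan_def by blast
    define a where "a = (\<Sum>v\<in>F \<inter> L. scaleC (c v) v)"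
    define b where "b = (\<Sum>v\<in>F - L. scaleC (c v) v)"
    have sab: "s = a + b" unfolding a_def b_def F(3) using F(1) by (metis sum.Int_Diff)
    have aL: "a \<in> L" unfolding a_def
    proof (rule csubspace_sum_mem[OF L], rule ballI)
      fix v assume "v \<in> F \<inter> L"
      then show "scaleC (c v) v \<in> L" using csubspace_scaleC_mem[OF L] by blast
    qed
    have ab: "cinner a b = 0" unfolding b_def cinner_sum_right
    proof (rule sum.neutral, rule ballI)
      fix v assume v: "v \<in> F - L"
      then have "v \<in> U" "v \<notin> L" using F(2) by auto
      then have "cinner a v = 0" using orth aL by blast
      then show "cinner a (scaleC (c v) v) = 0" by (simp add: cinner_scaleC_right)
    qed
    have yb: "cinner y b = 0" unfolding b_def cinner_sum_right
    proof (rule sum.neutral, rule ballI)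
      fix v assume v: "v \<in> F - L"
      then have "v \<in> U" "v \<notin> L" using F(2) by auto
      then have "cinner y v = 0" using orth by blast
      then show "cinner y (scaleC (c v) v) = 0" by (simp add: cinner_scaleC_right)
    qed
    have eq: "y - a = (y - s) + b" using sab by simp
    have "(norm (y - a))^2 = (norm (y - s))^2 + (norm b)^2 + 2 * Re (cinner (y - s) b)"
      unfolding eq by (rule norm_add_sq)
    also have "cinner (y - s) b = - cinner b b" using sab ab yb
      by (simp add: cinner_diff_left cinner_add_left)
    finally have "(norm (y - a))^2 \<le> (norm (y - s))^2" by (simp add: cinner_self_Re)
    then show ?thesis using aL by (auto simp: power2_le_iff_abs_le)
  qed
  obtain s where s: "\<forall>n. s n \<in> cspan U" "s \<longlonglongrightarrow> y" using y unfolding closure_sequential by blast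
  have "\<forall>n. \<exists>a. a \<in> L \<and> norm (y - a) \<le> norm (y - s n)" using key s(1) by blast
  from choice[OF this] obtain a where a0: "\<forall>n. a n \<in> L \<and> norm (y - a n) \<le> norm (y - s n)" by blast
  then have a: "\<And>n. a n \<in> L" "\<And>n. norm (y - a n) \<le> norm (y - s n)" by auto
  have "(\<lambda>n. s n - y) \<longlonglongrightarrow> 0" using s(2) by (simp add: LIM_zero)
  then have "(\<lambda>n. norm (s n - y)) \<longlonglongrightarrow> 0" by (simp add: tendsto_norm_zero)
  then have "(\<lambda>n. a n - y) \<longlonglongrightarrow> 0"
    by (rule Lim_null_comparison[rotated]) (use a in \<open>simp add: norm_minus_commute\<close>)
  then have "a \<longlonglongrightarrow> y" by (simp add: LIM_zero_cancel)
  moreover have "closed L" using L by (simp add: csubspace_def)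
  ultimately show ?thesis using a(1) closed_sequentially by blast
qed


lemma cinner_ext_left: "(\<And>u. cinner a u = cinner b (u::'a::complex_inner)) \<Longrightarrow> a = b"
  by (rule cinner_ext) (metis cinner_commute)

locale dnc =
  fixes n :: nat and z :: "nat \<Rightarrow> nat \<Rightarrow> complex" and V :: "nat \<Rightarrow> 'a::{complex_inner,complete_space} \<Rightarrow> 'a"
  assumes zp: "\<forall>i\<in>{1..n}. \<forall>j\<in>{1..n}. i \<noteq> j \<longrightarrow> norm (z i j) = 1 \<and> z j i = cnj (z i j)"
    and dn: "doubly_noncommuting n z V"
begin

lemma iso: "i \<in> {1..n} \<Longrightarrow> isometry (V i)"
proof -
  assume i: "i \<in> {1..n}"
  have "\<forall>i\<in>{1..n}. isometry (V i)" using dn unfolding doubly_noncommuting_def by (rule conjunct1)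
  then show ?thesis using i by (rule bspec)
qed

lemma lin: "i \<in> {1..n} \<Longrightarrow> clinear (V i)"
  by (rule isometry_clinear[OF iso])

lemma rel:
  assumes i: "i \<in> {1..n}" and j: "j \<in> {1..n}" and ij: "i \<noteq> j"
  shows "adj (V i) (V j x) = scaleC (cnj (z i j)) (V j (adj (V i) x))"
proof -
  have "\<forall>i\<in>{1..n}. \<forall>j\<in>{1..n}. i \<noteq> j \<longrightarrow>
        (\<forall>x. adj (V i) (V j x) = scaleC (cnj (z i j)) (V j (adj (V i) x)))"
    using dn unfolding doubly_noncommuting_def by (rule conjunct2)
  then have "\<forall>x. adj (V i) (V j x) = scaleC (cnj (z i j)) (V j (adj (V i) x))"
    using i j ij by simp
  then show ?thesis by (rule spec)
qed

lemma zboth: "i \<in> {1..n} \<Longrightarrow> j \<in> {1..n} \<Longrightarrow> i \<noteq> j \<Longrightarrow> norm (z i j) = 1 \<and> z j i = cnj (z i j)"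
proof -
  assume i: "i \<in> {1..n}" and j: "j \<in> {1..n}" and ij: "i \<noteq> j"
  have "\<forall>j\<in>{1..n}. i \<noteq> j \<longrightarrow> norm (z i j) = 1 \<and> z j i = cnj (z i j)" using zp i by (rule bspec)
  then have "i \<noteq> j \<longrightarrow> norm (z i j) = 1 \<and> z j i = cnj (z i j)" using j by (rule bspec)
  then show ?thesis using ij by (rule mp)
qed

lemma znorm: "i \<in> {1..n} \<Longrightarrow> j \<in> {1..n} \<Longrightarrow> i \<noteq> j \<Longrightarrow> cmod (z i j) = 1"
  using zboth by blast

lemma znz: "i \<in> {1..n} \<Longrightarrow> j \<in> {1..n} \<Longrightarrow> i \<noteq> j \<Longrightarrow> z i j \<noteq> 0"
proof
  assume a: "i \<in> {1..n}" "j \<in> {1..n}" "i \<noteq> j" and z0: "z i j = 0"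
  have "cmod (z i j) = 1" by (rule znorm[OF a])
  then show False using z0 by simp
qed

lemma zji: "i \<in> {1..n} \<Longrightarrow> j \<in> {1..n} \<Longrightarrow> i \<noteq> j \<Longrightarrow> z j i = cnj (z i j)"
  using zboth by blast

lemma comm:
  assumes i: "i \<in> {1..n}" and j: "j \<in> {1..n}" and ij: "i \<noteq> j"
  shows "V i (V j x) = scaleC (z i j) (V j (V i x))"
proof -
  define y where "y = V i (V j x)"
  have "adj (V j) y = scaleC (cnj (z j i)) (V i (adj (V j) (V j x)))"
    unfolding y_def using rel[OF j i] ij by auto
  also have "\<dots> = scaleC (z i j) (V i x)" using adj_iso_left[OF iso[OF j]] zji[OF i j ij] by simp
  finally have ay: "adj (V j) y = scaleC (z i j) (V i x)" .
  have "norm (adj (V j) y) = norm (scaleC (z i j) (V i x))" by (simp only: ay)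
  also have "\<dots> = norm x" by (simp add: norm_scaleC znorm[OF i j ij] isometry_norm[OF iso[OF i]])
  also have "\<dots> = norm y" by (simp add: y_def isometry_norm[OF iso[OF i]] isometry_norm[OF iso[OF j]])
  finally have "norm (adj (V j) y) = norm y" .
  then have "V j (adj (V j) y) = y" by (rule adj_norm_eq_range[OF iso[OF j]])
  then show ?thesis using ay by (simp add: y_def clinear_scaleC[OF lin[OF j]])
qed

lemma adj_comm:
  assumes i: "i \<in> {1..n}" and j: "j \<in> {1..n}" and ij: "i \<noteq> j"
  shows "adj (V i) (adj (V j) w) = scaleC (z i j) (adj (V j) (adj (V i) w))"
proof (rule cinner_ext_left)
  fix u
  have "cinner (adj (V i) (adj (V j) w)) u = cinner w (V j (V i u))"
    by (simp add: adj_prop2[OF iso[OF i], symmetric] adj_prop2[OF iso[OF j], symmetric])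
  also have "\<dots> = z j i * cinner w (V i (V j u))"
    by (simp add: comm[OF j i ij[symmetric]] cinner_scaleC_right)
  also have "\<dots> = z j i * cinner (adj (V j) (adj (V i) w)) u"
    by (simp add: adj_prop2[OF iso[OF i], symmetric] adj_prop2[OF iso[OF j], symmetric])
  also have "\<dots> = cinner (scaleC (z i j) (adj (V j) (adj (V i) w))) u"
    by (simp add: cinner_scaleC_left zji[OF i j ij])
  finally show "cinner (adj (V i) (adj (V j) w)) u = cinner (scaleC (z i j) (adj (V j) (adj (V i) w))) u" .
qed

lemma Hiso_inv:
  assumes i: "i \<in> {1..n}" and j: "j \<in> {1..n}"
  shows "adj (V j) ` H_iso (V i) \<subseteq> H_iso (V i)"
  unfolding H_iso_def
proof (rule ccspan_invariant[OF adj_bounded_linear[OF iso[OF j]] adj_clinear[OF iso[OF j]]])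
  let ?S = "\<Union>k. (V i ^^ k) ` kernel (adj (V i))"
  have sub: "csubspace (ccspan ?S)" by (rule csubspace_ccspan)
  show "adj (V j) ` ?S \<subseteq> ccspan ?S"
  proof clarify
    fix k w assume w: "w \<in> kernel (adj (V i))"
    show "adj (V j) ((V i ^^ k) w) \<in> ccspan ?S"
    proof (cases "i = j")
      case True
      show ?thesis
      proof (cases k)
        case 0
        then have "adj (V j) ((V i ^^ k) w) = 0" using w True by (simp add: kernel_def)
        moreover have "0 \<in> ccspan ?S" using sub unfolding csubspace_def by (rule conjunct1)
        ultimately show ?thesis by simp
      next
        case (Suc k')
        then have "adj (V j) ((V i ^^ k) w) = (V i ^^ k') w"
          using True adj_iso_left[OF iso[OF i]] by simp
        moreover have "(V i ^^ k') w \<in> ?S" by (rule UN_I[where a=k', OF UNIV_I], rule imageI[OF w])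
        ultimately show ?thesis using ccspan_superset[of ?S] by (simp add: subset_iff)
      qed
    next
      case False
      have c: "adj (V j) (V i x) = scaleC (cnj (z j i)) (V i (adj (V j) x))" for x
        by (rule rel[OF j i]) (use False in auto)
      have "adj (V j) ((V i ^^ k) w) = scaleC (cnj (z j i) ^ k) ((V i ^^ k) (adj (V j) w))"
        by (rule pow_comm_right[OF adj_clinear[OF iso[OF j]] lin[OF i] c])
      moreover have "adj (V j) w \<in> kernel (adj (V i))"
        using adj_comm[OF i j False, of w] w
        by (simp add: kernel_def clinear_zero[OF adj_clinear[OF iso[OF j]]])
      then have "(V i ^^ k) (adj (V j) w) \<in> ?S" by (intro UN_I[where a=k, OF UNIV_I] imageI)
      then have "(V i ^^ k) (adj (V j) w) \<in> ccspan ?S" using ccspan_superset[of ?S] by (simp add: subset_iff)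
      then have "scaleC (cnj (z j i) ^ k) ((V i ^^ k) (adj (V j) w)) \<in> ccspan ?S"
        by (rule csubspace_scaleC_mem[OF sub])
      ultimately show ?thesis by simp
    qed
  qed
qed

lemma Huni_inv:
  assumes i: "i \<in> {1..n}" and j: "j \<in> {1..n}"
  shows "adj (V j) ` H_uni (V i) \<subseteq> H_uni (V i)"
  unfolding H_uni_def
proof clarify
  fix x k assume x: "x \<in> (\<Inter>k. range (V i ^^ k))"
  show "adj (V j) x \<in> range (V i ^^ k)"
  proof (cases "i = j")
    case True
    have "x \<in> range (V i ^^ Suc k)" using x by (rule INT_D) simp
    then obtain u where "x = (V i ^^ Suc k) u" by (elim rangeE)
    then have "adj (V j) x = (V i ^^ k) u" using True adj_iso_left[OF iso[OF i]] by simp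
    then show ?thesis by simp
  next
    case False
    have "x \<in> range (V i ^^ k)" using x by (rule INT_D) simp
    then obtain u where u: "x = (V i ^^ k) u" by (elim rangeE)
    have c: "adj (V j) (V i x) = scaleC (cnj (z j i)) (V i (adj (V j) x))" for x
      by (rule rel[OF j i]) (use False in auto)
    have "adj (V j) x = scaleC (cnj (z j i) ^ k) ((V i ^^ k) (adj (V j) u))"
      unfolding u by (rule pow_comm_right[OF adj_clinear[OF iso[OF j]] lin[OF i] c])
    also have "\<dots> = (V i ^^ k) (scaleC (cnj (z j i) ^ k) (adj (V j) u))"
      by (simp add: clinear_scaleC[OF clinear_funpow[OF lin[OF i]]])
    finally show ?thesis by simp
  qed
qed

lemma HA_inv:
  assumes A: "A \<subseteq> {1..n}" and j: "j \<in> {1..n}" and x: "x \<in> H_A n V A"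
  shows "adj (V j) x \<in> H_A n V A"
  unfolding H_A_def
proof (intro IntI INT_I)
  fix i assume i: "i \<in> A"
  have "x \<in> H_iso (V i)" using x i unfolding H_A_def by blast
  then show "adj (V j) x \<in> H_iso (V i)" using Hiso_inv[of i j] i A j by blast
next
  fix i assume i: "i \<in> {1..n} - A"
  have "x \<in> H_uni (V i)" using x i unfolding H_A_def by blast
  then show "adj (V j) x \<in> H_uni (V i)" using Huni_inv[of i j] i A j by blast
qed

end


lemma pp_FP: "prod_pow V m J = FP V m (sorted_list_of_set J)"
  unfolding prod_pow_def FP_def ..

theorem proposition3p9:
  fixes n :: nat and z :: "nat \<Rightarrow> nat \<Rightarrow> complex"
    and V :: "nat \<Rightarrow> 'a::{complex_inner, complete_space} \<Rightarrow> 'a"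
    and A :: "nat set" and L :: "'a set"
  assumes "n \<ge> 1"
    and "\<forall>i\<in>{1..n}. \<forall>j\<in>{1..n}. i \<noteq> j \<longrightarrow> norm (z i j) = 1 \<and> z j i = cnj (z i j)"
    and "doubly_noncommuting n z V"
    and "A \<subseteq> {1..n}" and "A \<noteq> {}"
    and "csubspace L" and "L \<subseteq> H_A n V A"
    and "\<forall>j\<in>{1..n} - A. V j ` L \<subseteq> L"
    and "\<forall>k\<in>A \<rightarrow>\<^sub>E (UNIV::nat set). \<forall>k'\<in>A \<rightarrow>\<^sub>E (UNIV::nat set). k \<noteq> k' \<longrightarrow>
           orth_sets (prod_pow V k A ` L) (prod_pow V k' A ` L)"
    and "H_A n V A = ccspan (\<Union>k\<in>A \<rightarrow>\<^sub>E (UNIV::nat set). prod_pow V k A ` L)"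
  shows "L = W_A n V A"
proof -
  interpret dnc n z V using assms(2,3) by unfold_locales
  note Asub = assms(4) and Lsub = assms(6) and LH = assms(7) and Linv = assms(8)
    and orthH = assms(9) and HAeq = assms(10)
  define B where "B = {1..n} - A"
  have finA: "finite A" using Asub finite_subset by blast
  have finB: "finite B" by (simp add: B_def)
  define xsA where "xsA = sorted_list_of_set A"
  have setA: "set xsA = A" and distA: "distinct xsA" using finA by (auto simp: xsA_def)
  define xsB where "xsB = sorted_list_of_set B"
  have setB: "set xsB = B" and distB: "distinct xsB" using finB by (auto simp: xsB_def)
  define Q where "Q k = prod_pow V k A" for k
  have QFP: "Q k x = FP V k xsA x" for k x by (simp add: Q_def pp_FP xsA_def)
  define U where "U = (\<Union>k\<in>A \<rightarrow>\<^sub>E (UNIV::nat set). Q k ` L)"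
  have HA: "H_A n V A = ccspan U" using HAeq by (simp add: U_def Q_def)
  define k0 where "k0 = (\<lambda>i. if i \<in> A then 0::nat else undefined)"
  have k0E: "k0 \<in> A \<rightarrow>\<^sub>E (UNIV::nat set)" by (simp add: k0_def PiE_iff extensional_def)
  have Q0: "Q k0 x = x" for x unfolding QFP by (rule FP_zero) (simp add: setA k0_def)
  have linA: "\<forall>a\<in>set xsA. clinear (V a)" using setA Asub lin by auto
  have orthL: "cinner (Q k l) x = 0" if "k \<in> A \<rightarrow>\<^sub>E UNIV" "k \<noteq> k0" "l \<in> L" "x \<in> L" for k l x
  proof -
    have "orth_sets (Q k ` L) (Q k0 ` L)" using orthH that k0E by (simp add: Q_def)
    moreover have "x \<in> Q k0 ` L" using that Q0 by (metis image_eqI)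
    ultimately show ?thesis using that unfolding orth_sets_def by blast
  qed
  have kne: "\<exists>i\<in>A. k i \<ge> 1" if "k \<in> A \<rightarrow>\<^sub>E UNIV" "k \<noteq> k0" for k
  proof (rule ccontr)
    assume "\<not> (\<exists>i\<in>A. k i \<ge> 1)"
    then have "\<forall>i\<in>A. k i = 0" by auto
    then have "k = k0" using that(1) by (auto simp: k0_def PiE_iff extensional_def)
    then show False using that(2) by simp
  qed
  have Qpull: "\<exists>d. d \<noteq> 0 \<and> (\<forall>x. Q k x = scaleC d (V i (Q (k(i := k i - 1)) x)))"
    if "i \<in> A" "k i \<ge> 1" for k i
    unfolding QFP
  proof (rule FP_pull[OF linA _ distA])
    show "\<forall>a\<in>set xsA. \<forall>b\<in>set xsA. a \<noteq> b \<longrightarrow> z a b \<noteq> 0 \<and> (\<forall>x. V a (V b x) = scaleC (z a b) (V b (V a x)))"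
      using setA Asub znz comm by blast
  qed (use that setA in auto)
  have Qthrough: "\<exists>d. d \<noteq> 0 \<and> (\<forall>x. V j (Q k x) = scaleC d (Q k (V j x)))" if "j \<in> B" for j k
    unfolding QFP
  proof (rule FP_through[OF linA])
    show "clinear (V j)" using that lin by (simp add: B_def)
    show "\<forall>a\<in>set xsA. z j a \<noteq> 0 \<and> (\<forall>x. V j (V a x) = scaleC (z j a) (V a (V j x)))"
      using setA Asub znz comm that unfolding B_def by (metis Diff_iff subsetD)
  qed
  have F4: "y \<in> L" if y: "y \<in> H_A n V A" and yo: "\<forall>k\<in>A \<rightarrow>\<^sub>E UNIV. k \<noteq> k0 \<longrightarrow> (\<forall>l\<in>L. cinner (Q k l) y = 0)" for y
  proof (rule decomp[OF Lsub])
    show "y \<in> closure (cspan U)" using y HA by (simp add: ccspan_def)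
    show "\<forall>v\<in>U. v \<notin> L \<longrightarrow> (\<forall>a\<in>L. cinner a v = 0) \<and> cinner y v = 0"
    proof (intro ballI impI)
      fix v assume vU: "v \<in> U" and vL: "v \<notin> L"
      then obtain k l where k: "k \<in> A \<rightarrow>\<^sub>E UNIV" and l: "l \<in> L" and v: "v = Q k l" by (auto simp: U_def)
      have kk: "k \<noteq> k0" using vL v l Q0 by auto
      show "(\<forall>a\<in>L. cinner a v = 0) \<and> cinner y v = 0"
        using orthL[OF k kk l] yo k kk l v by (metis cinner_commute complex_cnj_zero)
    qed
  qed
  have K: "adj (V i) x = 0" if x: "x \<in> L" and i: "i \<in> A" for x i
  proof -
    have i1: "i \<in> {1..n}" using i Asub by auto
    define Zs where "Zs = {w. cinner x (V i w) = 0}"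
    have blZ: "bounded_linear (\<lambda>w. cinner x (V i w))"
      by (rule bounded_linear_compose[OF bounded_linear_cinner_right isometry_bounded_linear[OF iso[OF i1]]])
    have clZ: "closed Zs" unfolding Zs_def
      by (rule closed_Collect_eq[OF linear_continuous_on[OF blZ] continuous_on_const])
    have subZ: "csubspace Zs" unfolding csubspace_def Zs_def
      using clZ unfolding Zs_def
      by (auto simp: clinear_zero[OF lin[OF i1]] clinear_add[OF lin[OF i1]] clinear_scaleC[OF lin[OF i1]]
          cinner_add_right cinner_scaleC_right)
    have UZ: "U \<subseteq> Zs"
    proof clarify
      fix v assume "v \<in> U"
      then obtain k l where k: "k \<in> A \<rightarrow>\<^sub>E UNIV" and l: "l \<in> L" and v: "v = Q k l" by (auto simp: U_def)
      define k' where "k' = k(i := Suc (k i))"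
      have k'E: "k' \<in> A \<rightarrow>\<^sub>E UNIV" unfolding k'_def using PiE_fun_upd[OF _ k, of "Suc (k i)" i] i
        by (simp add: insert_absorb)
      have k'0: "k' \<noteq> k0" using i by (auto simp: k'_def k0_def dest: fun_cong[of _ _ i])
      obtain d where d: "d \<noteq> 0" "\<forall>y. Q k' y = scaleC d (V i (Q (k'(i := k' i - 1)) y))"
        using Qpull[OF i, of k'] by (auto simp: k'_def)
      have kk: "k'(i := k' i - 1) = k" by (simp add: k'_def)
      have "cinner x (Q k' l) = 0" using orthL[OF k'E k'0 l x] by (metis cinner_commute complex_cnj_zero)
      then have "d * cinner x (V i (Q k l)) = 0" using d kk by (simp add: cinner_scaleC_right)
      then show "v \<in> Zs" using d v by (simp add: Zs_def)
    qed
    have "H_A n V A \<subseteq> Zs" unfolding HA ccspan_def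
      using cspan_subset[OF subZ UZ] clZ by (simp add: closure_minimal)
    moreover have "adj (V i) x \<in> H_A n V A" using HA_inv[OF Asub i1] x LH by blast
    ultimately have "adj (V i) x \<in> Zs" by blast
    then have "cinner x (V i (adj (V i) x)) = 0" by (simp add: Zs_def)
    then have "cinner (adj (V i) x) (adj (V i) x) = 0" by (simp add: adj_prop2[OF iso[OF i1]])
    then show ?thesis by (simp add: cinner_eq_zero_iff)
  qed
  have Vinv: "adj (V j) x \<in> L" if j: "j \<in> B" and x: "x \<in> L" for j x
  proof (rule F4)
    have j1: "j \<in> {1..n}" using j by (simp add: B_def)
    show "adj (V j) x \<in> H_A n V A" using HA_inv[OF Asub j1] x LH by blast
    show "\<forall>k\<in>A \<rightarrow>\<^sub>E UNIV. k \<noteq> k0 \<longrightarrow> (\<forall>l\<in>L. cinner (Q k l) (adj (V j) x) = 0)"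
    proof (intro ballI impI)
      fix k l assume k: "k \<in> A \<rightarrow>\<^sub>E UNIV" and kk: "k \<noteq> k0" and l: "l \<in> L"
      obtain d where d: "\<forall>y. V j (Q k y) = scaleC d (Q k (V j y))" using Qthrough[OF j] by blast
      have "V j ` L \<subseteq> L" using Linv j unfolding B_def by (rule bspec)
      then have Vl: "V j l \<in> L" using l by blast
      have "cinner (Q k l) (adj (V j) x) = cinner (V j (Q k l)) x" by (simp add: adj_prop[OF iso[OF j1]])
      also have "\<dots> = cnj d * cinner (Q k (V j l)) x" using d by (simp add: cinner_scaleC_left)
      also have "\<dots> = 0" using orthL[OF k kk Vl x] by simp
      finally show "cinner (Q k l) (adj (V j) x) = 0" .
    qed
  qed
  have surjL: "\<exists>y\<in>L. x = V j y" if j: "j \<in> B" and x: "x \<in> L" for j x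
  proof -
    have j1: "j \<in> {1..n}" using j by (simp add: B_def)
    have "x \<in> H_uni (V j)" using x LH j unfolding H_A_def B_def by blast
    then have "x \<in> range (V j ^^ 1)" unfolding H_uni_def by blast
    then have "V j (adj (V j) x) = x" by (intro range_adj[OF iso[OF j1]]) simp
    then show ?thesis using Vinv[OF j x] by metis
  qed
  show ?thesis
  proof
    show "L \<subseteq> W_A n V A"
    proof
      fix x assume x: "x \<in> L"
      show "x \<in> W_A n V A"
        unfolding W_A_def
      proof (rule INT_I)
        fix m assume "m \<in> ({1..n} - A) \<rightarrow>\<^sub>E (UNIV::nat set)"
        obtain y where y: "y \<in> L" "x = FP V m xsB y"
          using FP_surj[of xsB L V x m] surjL x setB by blast
        have "y \<in> (\<Inter>i\<in>A. kernel (adj (V i)))" using K y(1) by (simp add: kernel_def)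
        moreover have "x = prod_pow V m ({1..n} - A) y" using y by (simp add: pp_FP xsB_def B_def)
        ultimately show "x \<in> prod_pow V m ({1..n} - A) ` (\<Inter>i\<in>A. kernel (adj (V i)))" by blast
      qed
    qed
    show "W_A n V A \<subseteq> L"
    proof
      fix x assume xW: "x \<in> W_A n V A"
      have xm: "\<exists>y\<in>(\<Inter>i\<in>A. kernel (adj (V i))). x = FP V m xsB y" if "m \<in> B \<rightarrow>\<^sub>E (UNIV::nat set)" for m
        using xW that unfolding W_A_def B_def xsB_def by (auto simp: pp_FP)
      define m0 where "m0 = (\<lambda>j. if j \<in> B then 0::nat else undefined)"
      have "m0 \<in> B \<rightarrow>\<^sub>E (UNIV::nat set)" by (simp add: m0_def PiE_iff extensional_def)
      then obtain y0 where y0: "y0 \<in> (\<Inter>i\<in>A. kernel (adj (V i)))" "x = FP V m0 xsB y0" using xm by blast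
      have "FP V m0 xsB y0 = y0" by (rule FP_zero) (simp add: setB m0_def)
      then have xK: "x \<in> (\<Inter>i\<in>A. kernel (adj (V i)))" using y0 by simp
      have xH: "x \<in> H_A n V A"
        unfolding H_A_def
      proof (intro IntI INT_I)
        fix i assume "i \<in> A"
        then have "x \<in> kernel (adj (V i))" using xK by blast
        then have "(V i ^^ 0) x \<in> (\<Union>k. (V i ^^ k) ` kernel (adj (V i)))" by blast
        then show "x \<in> H_iso (V i)" unfolding H_iso_def using ccspan_superset by force
      next
        fix j assume j: "j \<in> {1..n} - A"
        show "x \<in> H_uni (V j)" unfolding H_uni_def
        proof (rule INT_I)
          fix k :: nat
          define mk where "mk = (\<lambda>j'. if j' \<in> B then (if j' = j then k else 0) else undefined)"
          have "mk \<in> B \<rightarrow>\<^sub>E (UNIV::nat set)" by (simp add: mk_def PiE_iff extensional_def)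
          then obtain y where y: "x = FP V mk xsB y" using xm by blast
          have jB: "j \<in> B" using j by (simp add: B_def)
          have "FP V mk xsB y = (V j ^^ mk j) y"
            by (rule FP_single[OF distB]) (auto simp: setB jB mk_def)
          then have "x = (V j ^^ k) y" using y jB by (simp add: mk_def)
          then show "x \<in> range (V j ^^ k)" by simp
        qed
      qed
      show "x \<in> L"
      proof (rule F4[OF xH], intro ballI impI)
        fix k l assume k: "k \<in> A \<rightarrow>\<^sub>E UNIV" and kk: "k \<noteq> k0" and l: "l \<in> L"
        obtain i where i: "i \<in> A" "k i \<ge> 1" using kne[OF k kk] by blast
        have i1: "i \<in> {1..n}" using i Asub by auto
        obtain d where d: "\<forall>y. Q k y = scaleC d (V i (Q (k(i := k i - 1)) y))" using Qpull[of i k] i by blast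
        have "cinner (Q k l) x = cnj d * cinner (V i (Q (k(i := k i - 1)) l)) x"
          using d by (simp add: cinner_scaleC_left)
        also have "\<dots> = cnj d * cinner (Q (k(i := k i - 1)) l) (adj (V i) x)"
          by (simp add: adj_prop[OF iso[OF i1]])
        also have "\<dots> = 0" using xK i by (simp add: kernel_def)
        finally show "cinner (Q k l) x = 0" .
      qed
    qed
  qed
qed

end
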